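(* Let $a,b,c,d\in\mathbb R$, $\delta:=c+d-a-b$, with $a,b,\delta>0$ and $d-a,\ d-b,\ c+1-a,\ c-b\notin\{0,-1,-2,\dots\}$. Then $$\lim_{n\to\infty}\frac{{}_3F_2\left[\begin{matrix}-2n-2,\ c+n+1,\ d+n\\ a,\ b\end{matrix};1\right]}{{}_3F_2\left[\begin{matrix}-2n-1,\ c+n,\ d+n\\ a,\ b\end{matrix};1\right]}=-2.$$
   Context: ${}_3F_2\left[\begin{matrix}a_1,a_2,a_3\\ b_1,b_2\end{matrix};x\right]=\sum_{k\ge0}\frac{(a_1)_k(a_2)_k(a_3)_k}{(b_1)_k(b_2)_k}\frac{x^k}{k!}$ with $(x)_k=x(x+1)\cdots(x+k-1)$; when $a_1$ is a nonpositive integer the series terminates. *)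

theory Defs
  imports "HOL-Analysis.Analysis"
begin

text \<open>All terms with index k > m vanish since the Pochhammer
  symbol of -m vanishes there, so the finite sum equals the full series.\<close>
definition hyp3F2_term :: "nat \<Rightarrow> real \<Rightarrow> real \<Rightarrow> real \<Rightarrow> real \<Rightarrow> real \<Rightarrow> real" where
  "hyp3F2_term m a2 a3 b1 b2 x =
     (\<Sum>k\<le>m. pochhammer (- real m) k * pochhammer a2 k * pochhammer a3 k
              / (pochhammer b1 k * pochhammer b2 k) * x ^ k / fact k)"

end

theory Submission
  imports Defs
begin


lemma vander_neg:
  fixes x y :: real
  shows "(\<Sum>i\<le>N. of_nat (N choose i) * (-1)^i * pochhammer x i * pochhammer (y + of_nat i) (N - i))
         = pochhammer (y - x) N"
proof -
  have e1: "pochhammer (y + of_nat i) (N - i) = (-1)^(N-i) * pochhammer (1 - y - of_nat N) (N - i)"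
    if "i \<le> N" for i
  proof -
    have "pochhammer (y + of_nat i) (N - i) = pochhammer (- (- y - of_nat i)) (N - i)" by (simp add: add.commute)
    also have "\<dots> = (-1)^(N-i) * pochhammer (- y - of_nat i - of_nat (N - i) + 1) (N - i)"
      by (rule pochhammer_minus)
    also have "- y - of_nat i - of_nat (N - i) + 1 = 1 - y - of_nat N"
      using that by (simp add: of_nat_diff)
    finally show ?thesis .
  qed
  have e2: "(-1::real)^i * (-1)^(N-i) = (-1)^N" if "i \<le> N" for i
    using that by (metis power_add le_add_diff_inverse)
  have "(\<Sum>i\<le>N. of_nat (N choose i) * (-1)^i * pochhammer x i * pochhammer (y + of_nat i) (N - i))
      = (\<Sum>i\<le>N. (-1)^N * (of_nat (N choose i) * pochhammer x i * pochhammer (1 - y - of_nat N) (N - i)))"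
  proof (rule sum.cong[OF refl])
    fix i assume "i \<in> {..N}"
    then have i: "i \<le> N" by simp
    show "of_nat (N choose i) * (-1)^i * pochhammer x i * pochhammer (y + of_nat i) (N - i)
      = (-1)^N * (of_nat (N choose i) * pochhammer x i * pochhammer (1 - y - of_nat N) (N - i))"
      using e1[OF i] e2[OF i, symmetric] by (simp add: algebra_simps)
  qed
  also have "\<dots> = (-1)^N * pochhammer (x + (1 - y - of_nat N)) N"
    by (simp add: sum_distrib_left[symmetric] pochhammer_binomial_sum)
  also have "\<dots> = pochhammer (y - x) N"
  proof -
    have "pochhammer (y - x) N = pochhammer (- (x - y)) N" by simp
    also have "\<dots> = (-1)^N * pochhammer (x - y - of_nat N + 1) N" by (rule pochhammer_minus)
    finally show ?thesis by (simp add: algebra_simps)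
  qed
  finally show ?thesis .
qed

lemma poch_neg_fact:
  "pochhammer (- real m) k / fact k = (-1)^k * of_nat (m choose k)"
proof -
  have "of_nat (m choose k) = (real m gchoose k)" by (rule binomial_gbinomial)
  also have "\<dots> = (-1)^k * pochhammer (- real m) k / fact k" by (rule gbinomial_pochhammer)
  finally have "(-1)^k * of_nat (m choose k) = (-1)^k * ((-1)^k * pochhammer (- real m) k / fact k)"
    by simp
  also have "\<dots> = pochhammer (- real m) k / fact k"
    by (simp add: power_mult_distrib[symmetric] flip: power_add mult.assoc)
  finally show ?thesis by simp
qed

lemma inner_sum:
  fixes A b :: real
  assumes "l \<le> m"
  shows "(\<Sum>j\<le>m. of_nat (m choose j) * of_nat (j choose l) * pochhammer A j * pochhammer (b - A) (m - j))
       = of_nat (m choose l) * pochhammer A l * pochhammer (b + of_nat l) (m - l)"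
proof -
  let ?f = "\<lambda>j. of_nat (m choose j) * of_nat (j choose l) * pochhammer A j * pochhammer (b - A) (m - j)"
  have "(\<Sum>j\<le>m. ?f j) = (\<Sum>j\<in>{l..m}. ?f j)"
    by (rule sum.mono_neutral_right) (auto simp: binomial_eq_0)
  also have "\<dots> = (\<Sum>i\<in>{0..m-l}. ?f (i + l))"
    using sum.shift_bounds_cl_nat_ivl[of ?f 0 l "m - l"] assms by simp
  also have "\<dots> = (\<Sum>i\<le>m-l. of_nat (m choose l) * pochhammer A l *
       (of_nat ((m - l) choose i) * pochhammer (A + of_nat l) i * pochhammer (b - A) (m - l - i)))"
  proof (rule sum.cong)
    fix i assume "i \<in> {..m-l}"
    then have i: "i \<le> m - l" by simp
    have c: "(m choose (i + l)) * ((i + l) choose l) = (m choose l) * ((m - l) choose i)"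
      using choose_mult[of l "i+l" m] i assms by simp
    have p: "pochhammer A (i + l) = pochhammer A l * pochhammer (A + of_nat l) i"
      using pochhammer_product'[of A l i] by (simp add: add.commute)
    have "real (m choose (i + l)) * real ((i + l) choose l) = real (m choose l) * real ((m - l) choose i)"
      using c by (metis of_nat_mult)
    then show "?f (i + l) = of_nat (m choose l) * pochhammer A l *
       (of_nat ((m - l) choose i) * pochhammer (A + of_nat l) i * pochhammer (b - A) (m - l - i))"
      using p by (simp add: algebra_simps)
  qed (auto simp: atLeast0AtMost)
  also have "\<dots> = of_nat (m choose l) * pochhammer A l * (\<Sum>i\<le>m-l.
       of_nat ((m - l) choose i) * pochhammer (A + of_nat l) i * pochhammer (b - A) (m - l - i))"
    by (simp only: sum_distrib_left)
  also have "\<dots> = of_nat (m choose l) * pochhammer A l * pochhammer (A + of_nat l + (b - A)) (m - l)"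
    by (simp only: pochhammer_binomial_sum)
  finally show ?thesis by (simp add: algebra_simps)
qed

lemma ratio_expand:
  fixes a B :: real
  assumes a0: "\<And>j. pochhammer a j \<noteq> 0" and jm: "j \<le> m"
  shows "pochhammer (a - B) j / pochhammer a j
       = (\<Sum>l\<le>m. of_nat (j choose l) * (-1)^l * pochhammer B l / pochhammer a l)"
proof -
  have "pochhammer (a - B) j / pochhammer a j
      = (\<Sum>l\<le>j. of_nat (j choose l) * (-1)^l * pochhammer B l * pochhammer (a + of_nat l) (j - l)) / pochhammer a j"
    by (simp add: vander_neg)
  also have "\<dots> = (\<Sum>l\<le>j. of_nat (j choose l) * (-1)^l * pochhammer B l / pochhammer a l)"
    unfolding sum_divide_distrib
  proof (rule sum.cong[OF refl])
    fix l assume "l \<in> {..j}"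
    then have l: "l \<le> j" by simp
    have pj: "pochhammer a j = pochhammer a l * pochhammer (a + of_nat l) (j - l)"
      using pochhammer_product[OF l] .
    have nz: "pochhammer (a + of_nat l) (j - l) \<noteq> 0" using a0[of j] pj by auto
    have nz2: "pochhammer a l \<noteq> 0" using a0 by auto
    show "of_nat (j choose l) * (-1)^l * pochhammer B l * pochhammer (a + of_nat l) (j - l) / pochhammer a j
        = of_nat (j choose l) * (-1)^l * pochhammer B l / pochhammer a l"
      unfolding pj using nz nz2 by (simp add: field_simps)
  qed
  also have "\<dots> = (\<Sum>l\<le>m. of_nat (j choose l) * (-1)^l * pochhammer B l / pochhammer a l)"
    by (rule sum.mono_neutral_left) (use jm in \<open>auto simp: binomial_eq_0\<close>)
  finally show ?thesis .
qed

lemma core_I: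
  fixes a b A B :: real
  assumes a0: "\<And>j. pochhammer a j \<noteq> 0"
  shows "(\<Sum>k\<le>m. pochhammer (- real m) k * pochhammer A k * pochhammer B k * pochhammer (b + of_nat k) (m - k)
            / (pochhammer a k * fact k))
       = (\<Sum>j\<le>m. (-1)^j * pochhammer (- real m) j * pochhammer A j * pochhammer (a - B) j
            * pochhammer (b - A) (m - j) / (pochhammer a j * fact j))"
proof -
  have pn: "pochhammer (- real m) k / fact k = (-1)^k * of_nat (m choose k)" for k
    by (rule poch_neg_fact)
  have sq: "(-1::real)^k * (-1)^k = 1" for k by (simp flip: power_add)
  have "(\<Sum>j\<le>m. (-1)^j * pochhammer (- real m) j * pochhammer A j * pochhammer (a - B) j
            * pochhammer (b - A) (m - j) / (pochhammer a j * fact j))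
      = (\<Sum>j\<le>m. of_nat (m choose j) * pochhammer A j * pochhammer (b - A) (m - j)
            * (pochhammer (a - B) j / pochhammer a j))"
  proof (rule sum.cong[OF refl])
    fix j
    have "(-1)^j * pochhammer (- real m) j * pochhammer A j * pochhammer (a - B) j
            * pochhammer (b - A) (m - j) / (pochhammer a j * fact j)
        = (-1)^j * (pochhammer (- real m) j / fact j) * pochhammer A j * pochhammer (b - A) (m - j)
            * (pochhammer (a - B) j / pochhammer a j)"
      by (simp add: field_simps)
    also have "\<dots> = ((-1)^j * (-1)^j) * of_nat (m choose j) * pochhammer A j * pochhammer (b - A) (m - j)
            * (pochhammer (a - B) j / pochhammer a j)"
      by (simp add: pn)
    finally show "(-1)^j * pochhammer (- real m) j * pochhammer A j * pochhammer (a - B) j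
            * pochhammer (b - A) (m - j) / (pochhammer a j * fact j)
        = of_nat (m choose j) * pochhammer A j * pochhammer (b - A) (m - j)
            * (pochhammer (a - B) j / pochhammer a j)" by (simp add: sq)
  qed
  also have "\<dots> = (\<Sum>j\<le>m. \<Sum>l\<le>m. (-1)^l * pochhammer B l / pochhammer a l *
        (of_nat (m choose j) * of_nat (j choose l) * pochhammer A j * pochhammer (b - A) (m - j)))"
  proof (rule sum.cong[OF refl])
    fix j assume "j \<in> {..m}"
    then have j: "j \<le> m" by simp
    show "of_nat (m choose j) * pochhammer A j * pochhammer (b - A) (m - j)
            * (pochhammer (a - B) j / pochhammer a j)
        = (\<Sum>l\<le>m. (-1)^l * pochhammer B l / pochhammer a l *
        (of_nat (m choose j) * of_nat (j choose l) * pochhammer A j * pochhammer (b - A) (m - j)))"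
      unfolding ratio_expand[OF a0 j] sum_distrib_left
      by (rule sum.cong[OF refl]) (simp add: field_simps)
  qed
  also have "\<dots> = (\<Sum>l\<le>m. \<Sum>j\<le>m. (-1)^l * pochhammer B l / pochhammer a l *
        (of_nat (m choose j) * of_nat (j choose l) * pochhammer A j * pochhammer (b - A) (m - j)))"
    by (rule sum.swap)
  also have "\<dots> = (\<Sum>l\<le>m. (-1)^l * pochhammer B l / pochhammer a l *
        (of_nat (m choose l) * pochhammer A l * pochhammer (b + of_nat l) (m - l)))"
  proof (rule sum.cong[OF refl])
    fix l assume "l \<in> {..m}"
    then have l: "l \<le> m" by simp
    show "(\<Sum>j\<le>m. (-1)^l * pochhammer B l / pochhammer a l *
        (of_nat (m choose j) * of_nat (j choose l) * pochhammer A j * pochhammer (b - A) (m - j)))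
      = (-1)^l * pochhammer B l / pochhammer a l *
        (of_nat (m choose l) * pochhammer A l * pochhammer (b + of_nat l) (m - l))"
      by (simp only: sum_distrib_left[symmetric] inner_sum[OF l])
  qed
  also have "\<dots> = (\<Sum>k\<le>m. pochhammer (- real m) k * pochhammer A k * pochhammer B k * pochhammer (b + of_nat k) (m - k)
            / (pochhammer a k * fact k))"
  proof (rule sum.cong[OF refl])
    fix k
    have "pochhammer (- real m) k * pochhammer A k * pochhammer B k * pochhammer (b + of_nat k) (m - k)
            / (pochhammer a k * fact k)
        = (pochhammer (- real m) k / fact k) * pochhammer A k * pochhammer B k * pochhammer (b + of_nat k) (m - k)
            / pochhammer a k"
      by (simp add: field_simps)
    also have "\<dots> = (-1)^k * of_nat (m choose k) * pochhammer A k * pochhammer B k * pochhammer (b + of_nat k) (m - k)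
            / pochhammer a k" by (simp add: pn)
    finally show "(-1)^k * pochhammer B k / pochhammer a k *
        (of_nat (m choose k) * pochhammer A k * pochhammer (b + of_nat k) (m - k))
        = pochhammer (- real m) k * pochhammer A k * pochhammer B k * pochhammer (b + of_nat k) (m - k)
            / (pochhammer a k * fact k)" by (simp add: field_simps)
  qed
  finally show ?thesis ..
qed

lemma poch_split_div:
  fixes b :: real
  assumes "k \<le> m" "pochhammer b m \<noteq> 0"
  shows "1 / pochhammer b k = pochhammer (b + of_nat k) (m - k) / pochhammer b m"
proof -
  have pm: "pochhammer b m = pochhammer b k * pochhammer (b + of_nat k) (m - k)"
    using pochhammer_product[OF assms(1)] .
  then have "pochhammer b k \<noteq> 0" using assms(2) by auto
  then show ?thesis using assms(2) unfolding pm by (simp add: field_simps)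
qed

lemma transform:
  fixes a b A B :: real
  assumes a: "a > 0" and b: "b > 0" and e0: "\<And>k. k < m \<Longrightarrow> a + b - A - B + of_nat k \<noteq> 0"
  shows "hyp3F2_term m A B a b 1 = pochhammer (a+b-A-B) m / pochhammer b m *
     (\<Sum>k\<le>m. pochhammer (- real m) k * pochhammer (a-A) k * pochhammer (a-B) k
          / (pochhammer a k * pochhammer (a+b-A-B) k) / fact k)"
proof -
  define e where "e = a + b - A - B"
  have a0: "pochhammer a j \<noteq> 0" for j using pochhammer_pos[OF a, of j] by simp
  have b0: "pochhammer b j \<noteq> 0" for j using pochhammer_pos[OF b, of j] by simp
  have e0': "pochhammer e m \<noteq> 0"
    unfolding pochhammer_eq_0_iff e_def using e0 by (auto simp: algebra_simps)
  have "hyp3F2_term m A B a b 1 = (\<Sum>k\<le>m. pochhammer (- real m) k * pochhammer A k * pochhammer B k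
          * (1 / pochhammer b k) / (pochhammer a k * fact k))"
    unfolding hyp3F2_term_def by (rule sum.cong[OF refl]) (simp add: field_simps)
  also have "\<dots> = (\<Sum>k\<le>m. pochhammer (- real m) k * pochhammer A k * pochhammer B k
          * pochhammer (b + of_nat k) (m - k) / (pochhammer a k * fact k)) / pochhammer b m"
    unfolding sum_divide_distrib
    by (rule sum.cong[OF refl]) (simp add: poch_split_div[OF _ b0])
  also have "\<dots> = (\<Sum>j\<le>m. (-1)^j * pochhammer (- real m) j * pochhammer A j * pochhammer (a - B) j
            * pochhammer (b - A) (m - j) / (pochhammer a j * fact j)) / pochhammer b m"
    by (simp only: core_I[OF a0])
  also have "(\<Sum>j\<le>m. (-1)^j * pochhammer (- real m) j * pochhammer A j * pochhammer (a - B) j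
            * pochhammer (b - A) (m - j) / (pochhammer a j * fact j))
      = (\<Sum>j\<le>m. (-1)^j * pochhammer (- real m) j * pochhammer (a - B) j * pochhammer (a - (a - A)) j
            * pochhammer (e - (a - B)) (m - j) / (pochhammer a j * fact j))"
    by (rule sum.cong[OF refl]) (simp add: e_def algebra_simps)
  also have "\<dots> = (\<Sum>k\<le>m. pochhammer (- real m) k * pochhammer (a - B) k * pochhammer (a - A) k
       * pochhammer (e + of_nat k) (m - k) / (pochhammer a k * fact k))"
    by (simp only: core_I[OF a0])
  also have "\<dots> = pochhammer e m * (\<Sum>k\<le>m. pochhammer (- real m) k * pochhammer (a-A) k * pochhammer (a-B) k
          / (pochhammer a k * pochhammer e k) / fact k)"
    unfolding sum_distrib_left
  proof (rule sum.cong[OF refl])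
    fix k assume "k \<in> {..m}"
    then have k: "k \<le> m" by simp
    have "pochhammer (e + of_nat k) (m - k) = pochhammer e m * (1 / pochhammer e k)"
      using poch_split_div[OF k e0'] e0' by simp
    then show "pochhammer (- real m) k * pochhammer (a - B) k * pochhammer (a - A) k
       * pochhammer (e + of_nat k) (m - k) / (pochhammer a k * fact k)
      = pochhammer e m * (pochhammer (- real m) k * pochhammer (a-A) k * pochhammer (a-B) k
          / (pochhammer a k * pochhammer e k) / fact k)"
      by (simp add: field_simps)
  qed
  finally show ?thesis unfolding e_def by (simp add: field_simps)
qed



lemma poch_shift: "pochhammer (x::real) k * (x + of_nat k) = x * pochhammer (x + 1) k"
  by (metis pochhammer_Suc pochhammer_rec)

context
  fixes a b c d :: real
  assumes a: "a > 0" and b: "b > 0" and dl: "c + d - a - b > 0"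
begin

definition "T1f n k = pochhammer (- real (2*n+1)) k * pochhammer (a - (c + real n)) k * pochhammer (a - (d + real n)) k
   / (pochhammer a k * pochhammer (a + b - (c + real n) - (d + real n)) k) / fact k"
definition "T2f n k = pochhammer (- real (2*n+2)) k * pochhammer (a - (c + real n + 1)) k * pochhammer (a - (d + real n)) k
   / (pochhammer a k * pochhammer (a + b - (c + real n + 1) - (d + real n)) k) / fact k"
definition "phif n k = pochhammer (- real (2*n+2)) k * pochhammer (a - (c + real n + 1)) k * pochhammer (a - (d + real n)) k
   / (pochhammer a k * pochhammer (a + b - (c + real n) - (d + real n)) k) / fact k"

lemma e1_nz: "k \<le> 2*n+1 \<Longrightarrow> pochhammer (a + b - (c + real n) - (d + real n)) k \<noteq> 0"
  unfolding pochhammer_eq_0_iff using dl by (auto simp: algebra_simps)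

lemma e2_nz: "k \<le> 2*n+2 \<Longrightarrow> pochhammer (a + b - (c + real n + 1) - (d + real n)) k \<noteq> 0"
  unfolding pochhammer_eq_0_iff using dl by (auto simp: algebra_simps)

lemma repr1: "hyp3F2_term (2*n+1) (c + real n) (d + real n) a b 1
   = pochhammer (a + b - (c + real n) - (d + real n)) (2*n+1) / pochhammer b (2*n+1) * (\<Sum>k\<le>2*n+1. T1f n k)"
  unfolding T1f_def
  by (rule transform[OF a b]) (use dl in \<open>auto simp: algebra_simps\<close>)

lemma repr2: "hyp3F2_term (2*n+2) (c + real n + 1) (d + real n) a b 1
   = pochhammer (a + b - (c + real n + 1) - (d + real n)) (2*n+2) / pochhammer b (2*n+2) * (\<Sum>k\<le>2*n+2. T2f n k)"
  unfolding T2f_def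
  by (rule transform[OF a b]) (use dl in \<open>auto simp: algebra_simps\<close>)

lemma T1_phi: "T1f n k * ((2*real n+2)*(real n + c + 1 - a))
   = phif n k * ((2*real n+2 - real k)*(real n + c + 1 - a - real k))"
proof -
  have p1: "pochhammer (- real (2*n+2)) k * (real k - (2*real n+2)) = - (2*real n+2) * pochhammer (- real (2*n+1)) k"
    using poch_shift[of "- real (2*n+2)" k] by (simp add: algebra_simps)
  have p2: "pochhammer (a - (c + real n + 1)) k * (a - (c + real n + 1) + real k) = (a - (c + real n + 1)) * pochhammer (a - (c + real n)) k"
    using poch_shift[of "a - (c + real n + 1)" k] by (simp add: algebra_simps)
  define D where "D = pochhammer a k * pochhammer (a + b - (c + real n) - (d + real n)) k * fact k"
  have "T1f n k * ((2*real n+2)*(real n + c + 1 - a))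
     = (- (2*real n+2) * pochhammer (- real (2*n+1)) k) * ((a - (c + real n + 1)) * pochhammer (a - (c + real n)) k) * pochhammer (a - (d + real n)) k / D"
    unfolding T1f_def D_def by (simp add: field_simps)
  also have "\<dots> = (pochhammer (- real (2*n+2)) k * (real k - (2*real n+2))) * (pochhammer (a - (c + real n + 1)) k * (a - (c + real n + 1) + real k)) * pochhammer (a - (d + real n)) k / D"
    by (simp only: p1 p2)
  also have "\<dots> = phif n k * ((2*real n+2 - real k)*(real n + c + 1 - a - real k))"
    unfolding phif_def D_def by (simp add: field_simps)
  finally show ?thesis .
qed


lemma T2_phi:
  assumes k: "k \<le> 2*n+1"
  shows "T2f n k * (2*real n + (c+d-a-b) + 1) = phif n k * (2*real n + (c+d-a-b) + 1 - real k)"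
proof -
  define e where "e = a + b - (c + real n) - (d + real n)"
  have e2: "a + b - (c + real n + 1) - (d + real n) = e - 1" unfolding e_def by simp
  have nz1: "pochhammer e k \<noteq> 0" unfolding e_def using e1_nz[OF k] .
  have nz2: "pochhammer (e - 1) k \<noteq> 0" using e2_nz[of k n] k e2 by simp
  have p: "pochhammer (e - 1) k * (e - 1 + real k) = (e - 1) * pochhammer e k"
    using poch_shift[of "e - 1" k] by simp
  have W: "2*real n + (c+d-a-b) + 1 = -(e - 1)" unfolding e_def by simp
  have W2: "2*real n + (c+d-a-b) + 1 - real k = -(e - 1 + real k)" unfolding e_def by simp
  define Nn where "Nn = pochhammer (- real (2*n+2)) k * pochhammer (a - (c + real n + 1)) k * pochhammer (a - (d + real n)) k"
  have T2e: "T2f n k = Nn / (pochhammer a k * pochhammer (e - 1) k) / fact k"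
    unfolding T2f_def Nn_def e2 ..
  have phie: "phif n k = Nn / (pochhammer a k * pochhammer e k) / fact k"
    unfolding phif_def Nn_def e_def ..
  have "(e - 1) / pochhammer (e - 1) k = (e - 1 + real k) / pochhammer e k"
    using p nz1 nz2 by (simp add: field_simps)
  then have "Nn / (pochhammer a k * pochhammer (e - 1) k) / fact k * (-(e - 1))
     = Nn / (pochhammer a k * pochhammer e k) / fact k * (-(e - 1 + real k))"
  proof -
    have "Nn / (pochhammer a k * pochhammer (e - 1) k) / fact k * (-(e - 1))
        = - (Nn / pochhammer a k / fact k) * ((e - 1) / pochhammer (e - 1) k)"
      by (simp add: divide_inverse inverse_mult_distrib algebra_simps)
    also have "\<dots> = - (Nn / pochhammer a k / fact k) * ((e - 1 + real k) / pochhammer e k)"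
      using \<open>(e - 1) / pochhammer (e - 1) k = (e - 1 + real k) / pochhammer e k\<close> by simp
    also have "\<dots> = Nn / (pochhammer a k * pochhammer e k) / fact k * (-(e - 1 + real k))"
      by (simp add: divide_inverse inverse_mult_distrib algebra_simps)
    finally show ?thesis .
  qed
  then show ?thesis unfolding T2e phie W W2 by (simp add: algebra_simps)
qed

definition "sig n k = (2*real n + 2 - real k) * (real n + c + 1 - a - real k) * (real n + d - a - real k)
   / ((a + real k) * (2*real n + (c+d-a-b) - real k) * (real k + 1))"

lemma phi_Suc: "phif n (Suc k) = phif n k * sig n k"
proof -
  have "phif n (Suc k) = phif n k * ((- real (2*n+2) + real k) * (a - (c + real n + 1) + real k) * (a - (d + real n) + real k)
     / ((a + real k) * (a + b - (c + real n) - (d + real n) + real k) * (real k + 1)))"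
    unfolding phif_def by (simp add: pochhammer_Suc fact_Suc divide_inverse inverse_mult_distrib ac_simps)
  also have "(- real (2*n+2) + real k) * (a - (c + real n + 1) + real k) * (a - (d + real n) + real k)
     / ((a + real k) * (a + b - (c + real n) - (d + real n) + real k) * (real k + 1))
     = - ((2*real n + 2 - real k) * (real n + c + 1 - a - real k) * (real n + d - a - real k))
     / - ((a + real k) * (2*real n + (c+d-a-b) - real k) * (real k + 1))"
    by (rule arg_cong2[where f="(/)"]) (simp_all add: algebra_simps)
  finally show ?thesis unfolding sig_def by (simp only: minus_divide_divide)
qed

lemma T2_Suc: "T2f n (Suc k) = T2f n k * ((- real (2*n+2) + real k) * (a - (c + real n + 1) + real k) * (a - (d + real n) + real k)
     / ((a + real k) * (a + b - (c + real n + 1) - (d + real n) + real k) * (real k + 1)))"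
  unfolding T2f_def by (simp add: pochhammer_Suc fact_Suc divide_inverse inverse_mult_distrib ac_simps)

lemma T2_last: "T2f n (2*n+2) = T2f n (2*n+1) *
   (- ((real n + a - c) * (real n + a - d + 1)) / ((a + 2*real n + 1) * (- (c+d-a-b)) * (2*real n + 2)))"
proof -
  have "T2f n (Suc (2*n+1)) = T2f n (2*n+1) * ((- real (2*n+2) + real (2*n+1)) * (a - (c + real n + 1) + real (2*n+1)) * (a - (d + real n) + real (2*n+1))
     / ((a + real (2*n+1)) * (a + b - (c + real n + 1) - (d + real n) + real (2*n+1)) * (real (2*n+1) + 1)))"
    by (rule T2_Suc)
  also have "((- real (2*n+2) + real (2*n+1)) * (a - (c + real n + 1) + real (2*n+1)) * (a - (d + real n) + real (2*n+1))
     / ((a + real (2*n+1)) * (a + b - (c + real n + 1) - (d + real n) + real (2*n+1)) * (real (2*n+1) + 1)))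
     = (- ((real n + a - c) * (real n + a - d + 1)) / ((a + 2*real n + 1) * (- (c+d-a-b)) * (2*real n + 2)))"
    by (rule arg_cong2[where f="(/)"]) (simp_all add: algebra_simps)
  finally show ?thesis by simp
qed


lemma phi_Suc_raw: "phif n (Suc k) = phif n k * ((- real (2*n+2) + real k) * (a - (c + real n + 1) + real k) * (a - (d + real n) + real k)
     / ((a + real k) * (a + b - (c + real n) - (d + real n) + real k) * (real k + 1)))"
  unfolding phif_def by (simp add: pochhammer_Suc fact_Suc divide_inverse inverse_mult_distrib ac_simps)

definition "Pf n k = (real k - (2*real n+2)) * (a - (c + real n + 1) + real k) * (a - (d + real n) + real k)"
definition "Hf n k = real k * (a + real k - 1) * (a + b - (c + real n) - (d + real n) + real k - 1)"

lemma stein: "(\<Sum>k<2*n+1. phif n k * (Pf n k - Hf n k)) = phif n (2*n+1) * Hf n (2*n+1)"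
proof -
  have step: "phif n (Suc k) * Hf n (Suc k) = phif n k * Pf n k" if k: "k < 2*n+1" for k
  proof -
    have kk: "real k \<le> 2 * real n" using k by linarith
    have "a + b - (c + real n) - (d + real n) + real k < 0" using dl kk by simp
    moreover have "a + real k > 0" using a by simp
    ultimately have nz: "(a + real k) * (a + b - (c + real n) - (d + real n) + real k) * (real k + 1) \<noteq> 0"
      by (auto simp del: of_nat_Suc)
    have "Hf n (Suc k) = (a + real k) * (a + b - (c + real n) - (d + real n) + real k) * (real k + 1)"
      unfolding Hf_def by (simp add: algebra_simps)
    moreover have "(- real (2*n+2) + real k) * (a - (c + real n + 1) + real k) * (a - (d + real n) + real k) = Pf n k"
      unfolding Pf_def by (simp add: algebra_simps)
    ultimately show ?thesis unfolding phi_Suc_raw using nz by (simp only:) (simp add: field_simps)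
  qed
  have "(\<Sum>k<2*n+1. phif n k * (Pf n k - Hf n k)) = (\<Sum>k<2*n+1. phif n (Suc k) * Hf n (Suc k) - phif n k * Hf n k)"
  proof (rule sum.cong[OF refl])
    fix k assume "k \<in> {..<2*n+1}"
    then have "k < 2*n+1" by simp
    from step[OF this] show "phif n k * (Pf n k - Hf n k) = phif n (Suc k) * Hf n (Suc k) - phif n k * Hf n k"
      by (simp add: algebra_simps)
  qed
  also have "\<dots> = phif n (2*n+1) * Hf n (2*n+1) - phif n 0 * Hf n 0"
    by (rule sum_lessThan_telescope)
  finally show ?thesis by (simp add: Hf_def)
qed

definition "lam n = 1 / (real n * (2*real n+2) * (real n + c + 1 - a))"
definition "Rp n k = (2*real n + (c+d-a-b) + 1 - real k) / (2*real n + (c+d-a-b) + 1)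
   - 2 * ((2*real n+2 - real k)*(real n + c + 1 - a - real k)) / ((2*real n+2)*(real n + c + 1 - a))
   - lam n * (Pf n k - Hf n k)"

lemma main_identity:
  assumes al: "real n + c + 1 - a > 0"
  shows "(\<Sum>k\<le>2*n+2. T2f n k) - 2 * (\<Sum>k\<le>2*n+1. T1f n k)
     = (\<Sum>k\<le>2*n+1. phif n k * Rp n k) + lam n * phif n (2*n+1) * Pf n (2*n+1) + T2f n (2*n+2)"
proof -
  define W where "W = 2*real n + (c+d-a-b) + 1"
  have W0: "W > 0" unfolding W_def using dl by simp
  define Z where "Z = (2*real n+2)*(real n + c + 1 - a)"
  have Z0: "Z > 0" unfolding Z_def using al by simp
  have t2: "T2f n k = phif n k * ((W - real k) / W)" if "k \<le> 2*n+1" for k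
    using T2_phi[OF that] W0 unfolding W_def by (simp add: field_simps)
  have t1: "T1f n k = phif n k * (((2*real n+2 - real k)*(real n + c + 1 - a - real k)) / Z)" for k
    using T1_phi[of n k] Z0 unfolding Z_def by (simp add: field_simps)
  have "(\<Sum>k\<le>2*n+2. T2f n k) = (\<Sum>k\<le>2*n+1. T2f n k) + T2f n (2*n+2)"
    by (simp add: sum.atMost_Suc[of _ "2*n+1", simplified])
  also have "(\<Sum>k\<le>2*n+1. T2f n k) = (\<Sum>k\<le>2*n+1. phif n k * ((W - real k) / W))"
    by (rule sum.cong[OF refl]) (simp add: t2)
  finally have s2: "(\<Sum>k\<le>2*n+2. T2f n k) = (\<Sum>k\<le>2*n+1. phif n k * ((W - real k) / W)) + T2f n (2*n+2)" .
  have s1: "(\<Sum>k\<le>2*n+1. T1f n k) = (\<Sum>k\<le>2*n+1. phif n k * (((2*real n+2 - real k)*(real n + c + 1 - a - real k)) / Z))"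
    by (rule sum.cong[OF refl]) (simp add: t1)
  have "(\<Sum>k\<le>2*n+1. phif n k * ((W - real k) / W)) - 2 * (\<Sum>k\<le>2*n+1. phif n k * (((2*real n+2 - real k)*(real n + c + 1 - a - real k)) / Z))
      = (\<Sum>k\<le>2*n+1. phif n k * Rp n k + lam n * (phif n k * (Pf n k - Hf n k)))"
    unfolding sum_distrib_left sum_subtractf[symmetric]
    by (rule sum.cong[OF refl]) (simp add: Rp_def W_def Z_def algebra_simps)
  also have "\<dots> = (\<Sum>k\<le>2*n+1. phif n k * Rp n k) + lam n * (\<Sum>k\<le>2*n+1. phif n k * (Pf n k - Hf n k))"
    by (simp only: sum.distrib sum_distrib_left)
  also have "(\<Sum>k\<le>2*n+1. phif n k * (Pf n k - Hf n k)) = phif n (2*n+1) * Pf n (2*n+1)"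
  proof -
    have "(\<Sum>k\<le>2*n+1. phif n k * (Pf n k - Hf n k)) = (\<Sum>k<2*n+1. phif n k * (Pf n k - Hf n k)) + phif n (2*n+1) * (Pf n (2*n+1) - Hf n (2*n+1))"
    proof -
      have "{..2*n+1} = insert (2*n+1) {..<2*n+1}" by auto
      then show ?thesis by (simp only: sum.insert finite_lessThan lessThan_iff less_irrefl not_False_eq_True add.commute)
    qed
    also have "\<dots> = phif n (2*n+1) * Pf n (2*n+1)" by (simp only: stein) (simp add: algebra_simps)
    finally show ?thesis .
  qed
  finally show ?thesis using s1 s2 by (simp add: algebra_simps)
qed


definition "Cc = \<bar>a\<bar> + \<bar>b\<bar> + \<bar>c\<bar> + \<bar>d\<bar> + 10"

lemma Cc_ge: "Cc \<ge> 10" "\<bar>c + 1 - a\<bar> \<le> Cc" "\<bar>d - a\<bar> \<le> Cc" "c + d - a - b \<le> Cc" "\<bar>a - c\<bar> \<le> Cc"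
  "\<bar>a - d + 1\<bar> \<le> Cc" "a \<le> Cc"
  unfolding Cc_def by (auto simp: abs_if split: if_splits)

lemma Cc_lin: "c + 1 - a \<le> Cc" "a - c - 1 \<le> Cc" "d - a \<le> Cc" "a - d \<le> Cc"
  using Cc_ge(2,3) by (simp_all add: abs_le_iff)

lemma sig_pos:
  assumes N: "real n \<ge> 25*Cc+75" and j: "real j < (4/5)*real n"
  shows "sig n j > 0"
proof -
  note C = Cc_ge
  have "real n + c + 1 - a - real j > 0" using N j C(2) by (auto simp: abs_le_iff)
  moreover have "real n + d - a - real j > 0" using N j C(3) by (auto simp: abs_le_iff)
  moreover have "2*real n + 2 - real j > 0" using j by simp
  moreover have "2*real n + (c+d-a-b) - real j > 0" using j dl by simp
  moreover have "a + real j > 0" using a by simp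
  ultimately show ?thesis unfolding sig_def by (intro divide_pos_pos mult_pos_pos) auto
qed

lemma phi_pos:
  assumes N: "real n \<ge> 25*Cc+75" and k: "real k \<le> (4/5)*real n"
  shows "phif n k > 0"
  using k
proof (induction k)
  case 0
  then show ?case by (simp add: phif_def)
next
  case (Suc k)
  then have "real k < (4/5) * real n" by simp
  with Suc show ?case using sig_pos[OF N] by (simp add: phi_Suc)
qed

lemma sig_decay:
  assumes N: "real n \<ge> 25*Cc+75" and j1: "10 * real j \<ge> 7*real n - 10" and j2: "j + 1 \<le> 2*n"
  shows "\<bar>sig n j\<bar> \<le> 24/25"
proof -
  note C = Cc_ge
  define x where "x = real n + c + 1 - a - real j"
  define y where "y = real n + d - a - real j"
  have "real (j + 1) \<le> real (2*n)" using j2 by (simp only: of_nat_le_iff)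
  then have jr: "real j + 1 \<le> 2 * real n" by simp
  have n0: "real n \<ge> 0" by simp
  have nj1: "2 * real n - 2 * real j \<le> real j + 4" using j1 n0 by linarith
  have nj2: "2 * real j - 2 * real n \<le> real j + 4" using jr by linarith
  have jbig: "100 + 50 * Cc \<le> 3 * real j" using N j1 C(1) by linarith
  have jpos: "real j > 0" using jbig C(1) by linarith
  have "\<bar>x\<bar> \<le> \<bar>real n - real j\<bar> + \<bar>c + 1 - a\<bar>"
    unfolding x_def using abs_triangle_ineq[of "real n - real j" "c + 1 - a"] by (simp add: algebra_simps)
  then have hx: "\<bar>x\<bar> \<le> (14/25) * real j" using nj1 nj2 jbig C(2) by (simp add: abs_le_iff) linarith
  have "\<bar>y\<bar> \<le> \<bar>real n - real j\<bar> + \<bar>d - a\<bar>"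
    unfolding y_def using abs_triangle_ineq[of "real n - real j" "d - a"] by (simp add: algebra_simps)
  then have hy: "\<bar>y\<bar> \<le> (14/25) * real j" using nj1 nj2 jbig C(3) by (simp add: abs_le_iff) linarith
  have hxy: "\<bar>x\<bar> * \<bar>y\<bar> \<le> ((14/25) * real j) * ((14/25) * real j)"
    by (rule mult_mono[OF hx hy]) auto
  have jj: "real j * real j \<le> (a + real j) * (real j + 1)"
    using a jpos by (simp add: algebra_simps)
  define w where "w = 2*real n + (c+d-a-b) - real j"
  have w0: "w > 0" unfolding w_def using jr dl by linarith
  have w1a: "0 \<le> 2*real n + 2 - real j" using jr by linarith
  have w1b: "2*real n + 2 - real j \<le> 3 * w" unfolding w_def using jr dl by (simp only: ring_distribs; linarith)
  note w1 = w1a w1b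
  have den: "(a + real j) * w * (real j + 1) > 0" using a w0 jpos by simp
  have "\<bar>(2*real n + 2 - real j) * x * y\<bar> = (2*real n + 2 - real j) * (\<bar>x\<bar> * \<bar>y\<bar>)"
    using w1 by (simp add: abs_mult)
  also have "\<dots> \<le> (3 * w) * (((14/25) * real j) * ((14/25) * real j))"
    by (rule mult_mono[OF w1(2) hxy]) (use w0 in auto)
  also have "\<dots> = (588/625) * w * (real j * real j)" by simp
  also have "\<dots> \<le> (588/625) * w * ((a + real j) * (real j + 1))"
    by (rule mult_left_mono[OF jj]) (use w0 in auto)
  also have "\<dots> \<le> 24/25 * ((a + real j) * w * (real j + 1))"
    using den by (simp add: algebra_simps)
  finally have num: "\<bar>(2*real n + 2 - real j) * x * y\<bar> \<le> 24/25 * ((a + real j) * w * (real j + 1))" .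
  define D where "D = (a + real j) * w * (real j + 1)"
  define U where "U = (2*real n + 2 - real j) * x * y"
  have "\<bar>U / D\<bar> = \<bar>U\<bar> / D" using den unfolding D_def by (simp add: abs_divide)
  also have "\<dots> \<le> 24/25"
    using num den unfolding U_def D_def by (subst pos_divide_le_eq) (simp_all add: mult.commute)
  finally show ?thesis unfolding sig_def x_def[symmetric] y_def[symmetric] w_def[symmetric] U_def D_def .
qed

lemma sig_last:
  assumes N: "real n \<ge> 25*Cc+75"
  shows "\<bar>sig n (2*n)\<bar> \<le> 2 / (c+d-a-b)"
proof -
  note C = Cc_ge
  define x where "x = real n + c + 1 - a - real (2*n)"
  define y where "y = real n + d - a - real (2*n)"
  have x': "x = (c + 1 - a) - real n" unfolding x_def by simp
  have y': "y = (d - a) - real n" unfolding y_def by simp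
  have hx: "\<bar>x\<bar> \<le> 2 * real n" unfolding x' using abs_triangle_ineq4[of "c + 1 - a" "real n"] N C(1) C(2) by simp
  have hy: "\<bar>y\<bar> \<le> 2 * real n" unfolding y' using abs_triangle_ineq4[of "d - a" "real n"] N C(1) C(3) by simp
  have hxy: "\<bar>x\<bar> * \<bar>y\<bar> \<le> (2 * real n) * (2 * real n)"
    by (rule mult_mono[OF hx hy]) auto
  have den: "(a + real (2*n)) * (2*real n + (c+d-a-b) - real (2*n)) * (real (2*n) + 1) \<ge> (c+d-a-b) * (4 * (real n * real n))"
  proof -
    have "(a + real (2*n)) * (real (2*n) + 1) \<ge> (2 * real n) * (2 * real n)"
      by (rule mult_mono) (use a in auto)
    then have i: "(a + real (2*n)) * (real (2*n) + 1) \<ge> 4 * (real n * real n)" by simp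
    have e: "(a + real (2*n)) * (2*real n + (c+d-a-b) - real (2*n)) * (real (2*n) + 1)
        = (c+d-a-b) * ((a + real (2*n)) * (real (2*n) + 1))" by (simp add: algebra_simps)
    show ?thesis unfolding e by (rule mult_left_mono[OF i]) (use dl in simp)
  qed
  have npos: "real n > 0" using N C(1) by simp
  have "\<bar>(2*real n + 2 - real (2*n)) * x * y\<bar> = 2 * (\<bar>x\<bar> * \<bar>y\<bar>)" by (simp add: abs_mult)
  also have "\<dots> \<le> 2 / (c+d-a-b) * ((c+d-a-b) * (4 * (real n * real n)))" using hxy dl by simp
  also have "\<dots> \<le> 2 / (c+d-a-b) * ((a + real (2*n)) * (2*real n + (c+d-a-b) - real (2*n)) * (real (2*n) + 1))"
    by (rule mult_left_mono[OF den]) (use dl in simp)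
  finally have num: "\<bar>(2*real n + 2 - real (2*n)) * x * y\<bar> \<le> 2 / (c+d-a-b) * ((a + real (2*n)) * (2*real n + (c+d-a-b) - real (2*n)) * (real (2*n) + 1))" .
  have dpos: "(a + real (2*n)) * (2*real n + (c+d-a-b) - real (2*n)) * (real (2*n) + 1) > 0" using a dl by simp
  define D where "D = (a + real (2*n)) * (2*real n + (c+d-a-b) - real (2*n)) * (real (2*n) + 1)"
  define U where "U = (2*real n + 2 - real (2*n)) * x * y"
  have "\<bar>U / D\<bar> = \<bar>U\<bar> / D" using dpos unfolding D_def by (simp add: abs_divide)
  also have "\<dots> \<le> 2 / (c+d-a-b)"
    using num dpos unfolding U_def D_def by (subst pos_divide_le_eq) (simp_all add: mult.commute)
  finally show ?thesis unfolding sig_def x_def[symmetric] y_def[symmetric] U_def D_def .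
qed


lemma div10_bounds: "10 * real (m div 10) \<le> real m" "real m \<le> 10 * real (m div 10) + 9"
proof -
  have e: "m = 10 * (m div 10) + m mod 10" by simp
  have l: "m mod 10 \<le> 9" by simp
  have "real m = real (10 * (m div 10) + m mod 10)" using e by (rule arg_cong)
  also have "\<dots> = 10 * real (m div 10) + real (m mod 10)" by (simp only: of_nat_add of_nat_mult of_nat_numeral)
  finally have "real m = 10 * real (m div 10) + real (m mod 10)" .
  moreover have "real (m mod 10) \<le> 9" using l by simp
  ultimately show "10 * real (m div 10) \<le> real m" "real m \<le> 10 * real (m div 10) + 9" by simp_all
qed

lemma phi_decay:
  assumes N: "real n \<ge> 25*Cc+75" and i: "7*n div 10 + i \<le> 2*n"
  shows "\<bar>phif n (7*n div 10 + i)\<bar> \<le> phif n (7*n div 10) * (24/25)^i"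
proof -
  have "real (7*n div 10) \<le> (4/5) * real n" using div10_bounds(1)[of "7*n"] by simp
  then have Kpos: "phif n (7*n div 10) > 0" using phi_pos[OF N] by simp
  show ?thesis
  using i
proof (induction i)
  case 0
  then show ?case using Kpos by simp
next
  case (Suc i)
  define j where "j = 7*n div 10 + i"
  have j2: "j + 1 \<le> 2*n" using Suc.prems unfolding j_def by simp
  have "10 * real (7*n div 10) \<ge> 7 * real n - 9" using div10_bounds(2)[of "7*n"] by simp
  then have j1: "10 * real j \<ge> 7*real n - 10" unfolding j_def by simp
  have IH: "\<bar>phif n j\<bar> \<le> phif n (7*n div 10) * (24/25)^i" using Suc unfolding j_def by simp
  have "\<bar>phif n (Suc j)\<bar> = \<bar>phif n j\<bar> * \<bar>sig n j\<bar>" by (simp add: phi_Suc abs_mult)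
  also have "\<dots> \<le> (phif n (7*n div 10) * (24/25)^i) * (24/25)"
    by (rule mult_mono[OF IH sig_decay[OF N j1 j2]]) (use Kpos in auto)
  finally show ?case unfolding j_def by (simp add: mult.assoc)
qed
qed

lemma phi_tail:
  assumes N: "real n \<ge> 25*Cc+75" and k1: "7*n div 10 + n div 10 < k" and k2: "k \<le> 2*n+1"
  shows "\<bar>phif n k\<bar> \<le> phif n (7*n div 10) * (24/25)^(n div 10) * (1 + 2/(c+d-a-b))"
proof -
  define K where "K = 7*n div 10"
  define L where "L = n div 10"
  have Kpos: "phif n K > 0"
  proof -
    have "real K \<le> (4/5) * real n" using div10_bounds(1)[of "7*n"] unfolding K_def by simp
    then show ?thesis using phi_pos[OF N] by simp
  qed
  have KL: "K + L \<le> 2*n"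
  proof -
    have "10 * real K \<le> 7 * real n" "10 * real L \<le> real n" using div10_bounds(1)[of "7*n"] div10_bounds(1)[of n]
      unfolding K_def L_def by simp_all
    then have "real (K + L) \<le> real (2*n)" by simp
    then show ?thesis by (simp only: of_nat_le_iff)
  qed
  have M1: "1 \<le> 1 + 2/(c+d-a-b)" using dl by simp
  have q1: "(24/25::real)^i \<le> (24/25)^L" if "L \<le> i" for i
    using that by (rule power_decreasing) auto
  show ?thesis
  proof (cases "k \<le> 2*n")
    case True
    define i where "i = k - K"
    have ki: "k = K + i" unfolding i_def using k1 unfolding K_def by simp
    have "\<bar>phif n k\<bar> \<le> phif n K * (24/25)^i"
      unfolding ki K_def by (rule phi_decay[OF N]) (use True ki K_def in simp)
    also have "\<dots> \<le> phif n K * (24/25)^L"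
      by (rule mult_left_mono[OF q1]) (use k1 ki Kpos K_def L_def in auto)
    also have "\<dots> \<le> phif n K * (24/25)^L * (1 + 2/(c+d-a-b))"
      using mult_left_mono[OF M1, of "phif n K * (24/25)^L"] Kpos by simp
    finally show ?thesis unfolding K_def L_def .
  next
    case False
    then have k: "k = Suc (2*n)" using k2 by simp
    define i where "i = 2*n - K"
    have ki: "2*n = K + i" unfolding i_def using KL by simp
    have "\<bar>phif n (2*n)\<bar> \<le> phif n K * (24/25)^i"
      unfolding ki K_def by (rule phi_decay[OF N]) (use ki K_def in simp)
    also have "\<dots> \<le> phif n K * (24/25)^L"
      by (rule mult_left_mono[OF q1]) (use KL ki Kpos in auto)
    finally have a1: "\<bar>phif n (2*n)\<bar> \<le> phif n K * (24/25)^L" .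
    have "\<bar>phif n k\<bar> = \<bar>phif n (2*n)\<bar> * \<bar>sig n (2*n)\<bar>" unfolding k by (simp add: phi_Suc abs_mult)
    also have "\<dots> \<le> (phif n K * (24/25)^L) * (2/(c+d-a-b))"
      by (rule mult_mono[OF a1 sig_last[OF N]]) (use Kpos in auto)
    also have "\<dots> \<le> phif n K * (24/25)^L * (1 + 2/(c+d-a-b))"
    proof (rule mult_left_mono)
      show "2/(c+d-a-b) \<le> 1 + 2/(c+d-a-b)" by simp
      show "0 \<le> phif n K * (24/25)^L" using Kpos by simp
    qed
    finally show ?thesis unfolding K_def L_def .
  qed
qed



lemma T1_lower:
  assumes N: "real n \<ge> 25*Cc+75" and k: "real k \<le> (4/5) * real n"
  shows "T1f n k \<ge> phif n k / 25"
proof -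
  note C = Cc_ge Cc_lin
  define Z where "Z = (2*real n+2)*(real n + c + 1 - a)"
  define X where "X = (2*real n+2 - real k)*(real n + c + 1 - a - real k)"
  have ph: "phif n k > 0" using phi_pos[OF N k] .
  have al1: "real n + c + 1 - a > 0" using N C by linarith
  have Z0: "Z > 0" unfolding Z_def using al1 by simp
  have e: "T1f n k = phif n k * X / Z" using T1_phi[of n k] Z0 unfolding X_def Z_def by (simp add: field_simps)
  have x1: "2*real n+2 - real k \<ge> real n" using k by linarith
  have x2: "real n + c + 1 - a - real k \<ge> real n / 10" using k N C by linarith
  have x0: "0 \<le> 2*real n+2 - real k" "0 \<le> real n / 10" using k by linarith+
  have "X \<ge> real n * (real n / 10)" unfolding X_def by (rule mult_mono[OF x1 x2 x0])
  moreover
  have z1: "2*real n+2 \<le> (11/5) * real n" using N C by linarith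
  have z2: "real n + c + 1 - a \<le> (11/10) * real n" using N C by linarith
  have z0: "0 \<le> (11/5) * real n" "0 \<le> real n + c + 1 - a" using N C by linarith+
  have "Z \<le> ((11/5) * real n) * ((11/10) * real n)" unfolding Z_def by (rule mult_mono[OF z1 z2 z0])
  ultimately have X1: "real n * real n \<le> X * 10" and Z1: "Z * 50 \<le> 121 * (real n * real n)" by simp_all
  have nn: "0 \<le> real n * real n" by simp
  have "X \<ge> Z / 25" using X1 Z1 nn by linarith
  then have "phif n k * X / Z \<ge> phif n k * (Z / 25) / Z"
    using ph Z0 by (intro divide_right_mono mult_left_mono) auto
  then show ?thesis unfolding e using Z0 by simp
qed


lemma T1_upper:
  assumes N: "real n \<ge> 25*Cc+75" and k: "k \<le> 2*n+1"
  shows "\<bar>T1f n k\<bar> \<le> 4 * \<bar>phif n k\<bar>"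
proof -
  note C = Cc_ge Cc_lin
  define Z where "Z = (2*real n+2)*(real n + c + 1 - a)"
  define X where "X = (2*real n+2 - real k)*(real n + c + 1 - a - real k)"
  have "real k \<le> real (2*n+1)" using k by (simp only: of_nat_le_iff)
  then have kr: "real k \<le> 2 * real n + 1" by simp
  have k0: "real k \<ge> 0" by simp
  have al1: "real n + c + 1 - a \<ge> real n - Cc" using C by linarith
  have a2: "real n + c + 1 - a > 0" using al1 N C by linarith
  have Z0: "Z > 0" unfolding Z_def using a2 by simp
  have e: "T1f n k = phif n k * X / Z" using T1_phi[of n k] Z0 unfolding X_def Z_def by (simp add: field_simps)
  have x1: "\<bar>2*real n+2 - real k\<bar> \<le> 2*real n+2" using kr k0 by linarith
  have x2: "\<bar>real n + c + 1 - a - real k\<bar> \<le> 4 * real n - 4 * Cc"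
    by (rule abs_leI) (use kr k0 N C in linarith)+
  have "\<bar>X\<bar> \<le> (2*real n+2) * (4 * real n - 4 * Cc)" unfolding X_def abs_mult
    by (rule mult_mono[OF x1 x2]) auto
  also have "\<dots> \<le> (2*real n+2) * (4 * real n + 4 * c + 4 - 4 * a)"
    by (rule mult_left_mono) (use al1 in linarith, simp)
  also have "\<dots> = 4 * Z" unfolding Z_def by (simp add: algebra_simps)
  finally have X4: "\<bar>X\<bar> \<le> 4 * Z" .
  have "\<bar>T1f n k\<bar> = \<bar>phif n k\<bar> * \<bar>X\<bar> / Z" unfolding e using Z0 by (simp add: abs_mult abs_divide)
  also have "\<dots> \<le> \<bar>phif n k\<bar> * (4 * Z) / Z" using X4 Z0 by (intro divide_right_mono mult_left_mono) auto
  also have "\<dots> = 4 * \<bar>phif n k\<bar>" using Z0 by simp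
  finally show ?thesis .
qed


definition "al = c + 1 - a"
definition "be = d - a"
definition "ga = c + d - a - b + 1"
definition "q0 = 2*al*be"
definition "q1 = ga - ga*a - 2*be - 2*al - al*be"
definition "q2 = 1 + a - ga + be + al"
definition "p0 = 2*be + 2*al*be"
definition "p1 = 2 - 2*a - 3*be - 2*al"
definition "r0 = 2*be"
definition "Qf n k = q0 + q1 * real k + q2 * (real k * real k) + real n * p0 + p1 * (real n * real k) + r0 * (real n * real n)"

lemma Rp_identity:
  assumes n0: "real n > 0" and al0: "real n + c + 1 - a > 0"
  shows "real n * ((2*real n+2)*(real n + c + 1 - a)) * Rp n k
     = Qf n k - real n * (2 - ga) * (real n + al) * real k / (2*real n + ga)"
proof -
  define N where "N = real n"
  define Z where "Z = (2*N+2)*(N + c + 1 - a)"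
  define W where "W = 2*N + ga"
  define X where "X = (2*N+2 - real k)*(N + c + 1 - a - real k)"
  have g: "W > 0" unfolding W_def ga_def N_def using dl n0 by simp
  have Z0: "Z > 0" unfolding Z_def N_def using al0 by simp
  have N0: "N > 0" unfolding N_def using n0 .
  have W': "2*real n + (c+d-a-b) + 1 = W" unfolding ga_def W_def N_def by simp
  have R: "Rp n k = (W - real k) / W - 2 * X / Z - (1 / (N * Z)) * (Pf n k - Hf n k)"
    unfolding Rp_def lam_def W' X_def Z_def N_def by (simp add: mult.assoc)
  have s1: "N * Z * Rp n k = N * Z * ((W - real k) / W) - 2 * N * X - (Pf n k - Hf n k)"
    unfolding R using N0 Z0 by (simp add: field_simps)
  have s2: "N * Z * ((W - real k) / W) = N * Z - N * (N + al) * real k - N * (2 - ga) * (N + al) * real k / W"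
  proof -
    have "Z = (N + al) * W + (2 - ga) * (N + al)" unfolding Z_def W_def al_def by (simp add: algebra_simps)
    then have "N * Z * ((W - real k) / W) = N * ((N + al) * W + (2 - ga) * (N + al)) * ((W - real k) / W)" by simp
    also have "\<dots> = N * Z - N * (N + al) * real k - N * (2 - ga) * (N + al) * real k / W"
      using g unfolding Z_def W_def al_def by (simp add: field_simps)
    finally show ?thesis .
  qed
  have s3: "N * Z - N * (N + al) * real k - 2 * N * X - (Pf n k - Hf n k) = Qf n k"
    unfolding Z_def X_def Pf_def Hf_def Qf_def q0_def q1_def q2_def p0_def p1_def r0_def al_def be_def ga_def N_def
    by algebra
  show ?thesis using s1 s2 s3 unfolding N_def[symmetric] Z_def[symmetric] W_def[symmetric] by simp
qed


definition "CR = \<bar>q0\<bar> + 3*\<bar>q1\<bar> + 9*\<bar>q2\<bar> + \<bar>p0\<bar> + 3*\<bar>p1\<bar> + \<bar>r0\<bar> + 3/2*\<bar>2-ga\<bar>*(1+\<bar>al\<bar>)"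

lemma Rp_bound:
  assumes N: "real n \<ge> 25*Cc+75" and k: "k \<le> 2*n+1"
  shows "\<bar>Rp n k\<bar> \<le> CR / real n"
proof -
  note C = Cc_ge Cc_lin
  define M where "M = real n"
  have M1: "M \<ge> 1" unfolding M_def using N C by linarith
  have "real k \<le> real (2*n+1)" using k by (simp only: of_nat_le_iff)
  then have kr: "real k \<le> 3 * M" using M1 unfolding M_def by simp
  have k0: "real k \<ge> 0" by simp
  have MM: "M \<le> M * M" using M1 by simp
  have MM1: "1 \<le> M * M" using M1 by (metis mult_mono' zero_le_one mult_1 order_trans MM)
  have kM: "real k \<le> 3 * (M * M)" using kr MM by linarith
  have kk: "real k * real k \<le> 9 * (M * M)"
  proof -
    have "real k * real k \<le> (3 * M) * (3 * M)" by (rule mult_mono[OF kr kr]) (use M1 in auto)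
    then show ?thesis by simp
  qed
  have Mk: "M * real k \<le> 3 * (M * M)"
  proof -
    have "M * real k \<le> M * (3 * M)" by (rule mult_left_mono[OF kr]) (use M1 in auto)
    then show ?thesis by simp
  qed
  have Q: "\<bar>Qf n k\<bar> \<le> (\<bar>q0\<bar> + 3*\<bar>q1\<bar> + 9*\<bar>q2\<bar> + \<bar>p0\<bar> + 3*\<bar>p1\<bar> + \<bar>r0\<bar>) * (M * M)"
  proof -
    have "\<bar>Qf n k\<bar> \<le> \<bar>q0\<bar> + \<bar>q1\<bar> * real k + \<bar>q2\<bar> * (real k * real k) + M * \<bar>p0\<bar> + \<bar>p1\<bar> * (M * real k) + \<bar>r0\<bar> * (M * M)"
      unfolding Qf_def M_def by (simp add: abs_mult order_trans[OF abs_triangle_ineq] add_mono)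
    also have "\<dots> \<le> \<bar>q0\<bar> * (M*M) + \<bar>q1\<bar> * (3*(M*M)) + \<bar>q2\<bar> * (9*(M*M)) + (M*M) * \<bar>p0\<bar> + \<bar>p1\<bar> * (3*(M*M)) + \<bar>r0\<bar> * (M * M)"
    proof -
      have q0b: "\<bar>q0\<bar> \<le> \<bar>q0\<bar> * (M*M)" using mult_left_mono[OF MM1, of "\<bar>q0\<bar>"] by simp
      show ?thesis by (intro add_mono q0b mult_left_mono mult_right_mono kM kk Mk MM) (use M1 in auto)
    qed
    also have "\<dots> = (\<bar>q0\<bar> + 3*\<bar>q1\<bar> + 9*\<bar>q2\<bar> + \<bar>p0\<bar> + 3*\<bar>p1\<bar> + \<bar>r0\<bar>) * (M * M)"
      by (simp add: algebra_simps)
    finally show ?thesis .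
  qed
  have al0: "real n + c + 1 - a > 0" using N C by linarith
  have g: "2*M + ga \<ge> 2*M" unfolding ga_def using dl by simp
  have alM: "\<bar>M + al\<bar> \<le> M * (1 + \<bar>al\<bar>)"
  proof -
    have "\<bar>M + al\<bar> \<le> M + \<bar>al\<bar>" using M1 abs_triangle_ineq[of M al] by simp
    also have "\<dots> \<le> M + M * \<bar>al\<bar>" using M1 by (simp add: mult_right_mono[of 1 M "\<bar>al\<bar>", simplified])
    finally show ?thesis by (simp add: algebra_simps)
  qed
  have kg: "real k / (2*M + ga) \<le> 3/2"
  proof -
    have "real k \<le> 3 * M + (3/2) * ga" using kr g by linarith
    then have "real k \<le> 3/2 * (2*M + ga)" by (simp add: algebra_simps)
    then show ?thesis using g M1 by (simp add: divide_le_eq)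
  qed
  have F: "\<bar>M * (2 - ga) * (M + al) * real k / (2*M + ga)\<bar> \<le> 3/2*\<bar>2-ga\<bar>*(1+\<bar>al\<bar>) * (M * M)"
  proof -
    have "\<bar>M * (2 - ga) * (M + al) * real k / (2*M + ga)\<bar> = M * \<bar>2 - ga\<bar> * \<bar>M + al\<bar> * (real k / (2*M + ga))"
      using M1 g by (simp add: abs_mult abs_divide)
    also have "\<dots> \<le> M * \<bar>2 - ga\<bar> * (M * (1 + \<bar>al\<bar>)) * (3/2)"
      by (intro mult_mono alM kg mult_left_mono) (use M1 g in auto)
    also have "\<dots> = 3/2*\<bar>2-ga\<bar>*(1+\<bar>al\<bar>) * (M * M)" by (simp add: algebra_simps)
    finally show ?thesis .
  qed
  define Z where "Z = (2*M+2)*(M + c + 1 - a)"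
  have Z1: "Z \<ge> M * M"
  proof -
    have h1: "M/2 \<le> M + c + 1 - a" using N C unfolding M_def by linarith
    have h2: "0 \<le> 2*M+2" "0 \<le> M/2" using M1 by linarith+
    have h0: "2*M \<le> 2*M+2" by simp
    have "(2*M) * (M/2) \<le> (2*M+2)*(M + c + 1 - a)"
      by (rule mult_mono[OF h0 h1 h2(1) h2(2)])
    then show ?thesis unfolding Z_def by simp
  qed
  have id: "M * Z * Rp n k = Qf n k - M * (2 - ga) * (M + al) * real k / (2*M + ga)"
    using Rp_identity[of n k] M1 al0 unfolding M_def Z_def by simp
  define Fr where "Fr = M * (2 - ga) * (M + al) * real k / (2*M + ga)"
  have e: "CR * (M*M) = (\<bar>q0\<bar> + 3*\<bar>q1\<bar> + 9*\<bar>q2\<bar> + \<bar>p0\<bar> + 3*\<bar>p1\<bar> + \<bar>r0\<bar>) * (M * M) + 3/2*\<bar>2-ga\<bar>*(1+\<bar>al\<bar>) * (M * M)"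
    unfolding CR_def by (simp add: algebra_simps)
  have "\<bar>M * Z * Rp n k\<bar> \<le> CR * (M * M)"
    unfolding id Fr_def[symmetric] using abs_triangle_ineq4[of "Qf n k" Fr] Q F[folded Fr_def] e by linarith
  moreover have Zp: "Z > 0" using Z1 MM1 by linarith
  ultimately have "M * Z * \<bar>Rp n k\<bar> \<le> CR * (M * M)" using M1 by (simp add: abs_mult)
  then have "M * (Z * \<bar>Rp n k\<bar>) \<le> M * (CR * M)" by (simp add: algebra_simps)
  then have A: "Z * \<bar>Rp n k\<bar> \<le> CR * M" using M1 by simp
  have B: "(M * M) * \<bar>Rp n k\<bar> \<le> Z * \<bar>Rp n k\<bar>" by (rule mult_right_mono[OF Z1]) simp
  have "M * (M * \<bar>Rp n k\<bar>) \<le> M * CR" using A B by (simp add: algebra_simps)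
  then have "M * \<bar>Rp n k\<bar> \<le> CR" using M1 by simp
  then show ?thesis using M1 unfolding M_def by (simp add: field_simps)
qed


lemma lamP_bound:
  assumes N: "real n \<ge> 25*Cc+75"
  shows "\<bar>lam n * Pf n (2*n+1)\<bar> \<le> 1"
proof -
  note C = Cc_ge Cc_lin
  define M where "M = real n"
  have M1: "M \<ge> 100" "M \<ge> 25*Cc+75" unfolding M_def using N C by linarith+
  have P: "Pf n (2*n+1) = - ((M + a - c) * (M + a - d + 1))" unfolding Pf_def M_def by (simp add: algebra_simps)
  have h1: "\<bar>M + a - c\<bar> \<le> 2 * M" by (rule abs_leI) (use M1 C in linarith)+
  have h2: "\<bar>M + a - d + 1\<bar> \<le> 2 * M" by (rule abs_leI) (use M1 C in linarith)+
  have Pb: "\<bar>Pf n (2*n+1)\<bar> \<le> (2*M) * (2*M)" unfolding P abs_minus_cancel abs_mult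
    by (rule mult_mono[OF h1 h2]) (use M1 in auto)
  define Z where "Z = M * (2*M+2) * (M + c + 1 - a)"
  have z1: "M/2 \<le> M + c + 1 - a" using M1 C by linarith
  have Z1: "Z \<ge> M * (2*M) * (M/2)" unfolding Z_def
    by (intro mult_mono z1) (use M1 in auto)
  have "M * (2*M) * (M/2) > 0" using M1 by simp
  then have Z0: "Z > 0" using Z1 by linarith
  have lz: "lam n * Pf n (2*n+1) = Pf n (2*n+1) / Z" unfolding lam_def Z_def M_def by simp
  have "\<bar>lam n * Pf n (2*n+1)\<bar> = \<bar>Pf n (2*n+1)\<bar> / Z"
    unfolding lz abs_divide using Z0 by simp
  also have "\<dots> \<le> 1"
  proof -
    have "(2*M) * (2*M) \<le> M * (2*M) * (M/2)"
    proof -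
      have "4 \<le> M" using M1 by simp
      then have "4 * (M*M) \<le> M * (M*M)" by (rule mult_right_mono) simp
      then show ?thesis by (simp add: algebra_simps)
    qed
    then have "\<bar>Pf n (2*n+1)\<bar> \<le> Z" using Pb Z1 by linarith
    then show ?thesis using Z0 by simp
  qed
  finally show ?thesis .
qed

lemma T2last_bound:
  assumes N: "real n \<ge> 25*Cc+75"
  shows "\<bar>T2f n (2*n+2)\<bar> \<le> \<bar>phif n (2*n+1)\<bar>"
proof -
  note C = Cc_ge Cc_lin
  define M where "M = real n"
  define dd where "dd = c+d-a-b"
  have dd0: "dd > 0" unfolding dd_def using dl by simp
  have M1: "M \<ge> 100" "M \<ge> 25*Cc+75" unfolding M_def using N C by linarith+
  define W where "W = 2*M + dd + 1"
  have W1: "W \<ge> 1" unfolding W_def using dd0 M1 by simp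
  have t: "T2f n (2*n+1) * W = phif n (2*n+1) * dd"
    using T2_phi[of "2*n+1" n] unfolding W_def M_def dd_def by (simp add: algebra_simps)
  have t1: "\<bar>T2f n (2*n+1)\<bar> \<le> \<bar>phif n (2*n+1)\<bar> * dd"
  proof -
    have aW: "\<bar>W\<bar> = W" using W1 by simp
    have ad: "\<bar>dd\<bar> = dd" using dd0 by simp
    have "\<bar>T2f n (2*n+1)\<bar> * W = \<bar>phif n (2*n+1)\<bar> * dd"
      using arg_cong[OF t, of abs] unfolding abs_mult aW ad .
    moreover have "\<bar>T2f n (2*n+1)\<bar> \<le> \<bar>T2f n (2*n+1)\<bar> * W"
      using mult_left_mono[OF W1, of "\<bar>T2f n (2*n+1)\<bar>"] by simp
    ultimately show ?thesis by simp
  qed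
  define r where "r = - ((real n + a - c) * (real n + a - d + 1)) / ((a + 2*real n + 1) * (- (c+d-a-b)) * (2*real n + 2))"
  have T: "T2f n (2*n+2) = T2f n (2*n+1) * r" unfolding r_def by (rule T2_last)
  have h1: "\<bar>M + a - c\<bar> \<le> 2 * M" by (rule abs_leI) (use M1 C in linarith)+
  have h2: "\<bar>M + a - d + 1\<bar> \<le> 2 * M" by (rule abs_leI) (use M1 C in linarith)+
  have num: "\<bar>(M + a - c) * (M + a - d + 1)\<bar> \<le> (2*M) * (2*M)" unfolding abs_mult
    by (rule mult_mono[OF h1 h2]) (use M1 in auto)
  have den1: "(2*M) * (2*M) \<le> (a + 2*M + 1) * (2*M + 2)" by (rule mult_mono) (use a M1 in auto)
  have r1: "\<bar>r\<bar> \<le> 1 / dd"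
  proof -
    have dp: "(a + 2*M + 1) * dd * (2*M + 2) > 0" using a M1 dd0 by simp
    have e1: "(a + 2*M + 1) * (- dd) * (2*M + 2) = - ((a + 2*M + 1) * dd * (2*M + 2))" by simp
    have r': "r = ((M + a - c) * (M + a - d + 1)) / ((a + 2*M + 1) * dd * (2*M + 2))"
      unfolding r_def M_def[symmetric] dd_def[symmetric] e1 minus_divide_divide ..
    have "\<bar>r\<bar> = \<bar>(M + a - c) * (M + a - d + 1)\<bar> / ((a + 2*M + 1) * dd * (2*M + 2))"
      unfolding r' abs_divide using dp by simp
    also have "\<dots> \<le> ((a + 2*M + 1) * (2*M + 2)) / ((a + 2*M + 1) * dd * (2*M + 2))"
      using num den1 dp by (intro divide_right_mono) auto
    also have "\<dots> = 1 / dd" using dp dd0 a M1 by (simp add: field_simps)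
    finally show ?thesis .
  qed
  have "\<bar>T2f n (2*n+2)\<bar> = \<bar>T2f n (2*n+1)\<bar> * \<bar>r\<bar>" unfolding T by (simp add: abs_mult)
  also have "\<dots> \<le> (\<bar>phif n (2*n+1)\<bar> * dd) * (1 / dd)" by (rule mult_mono[OF t1 r1]) (use dd0 in auto)
  also have "\<dots> = \<bar>phif n (2*n+1)\<bar>" using dd0 by simp
  finally show ?thesis .
qed


lemma CR_nonneg: "CR \<ge> 0" unfolding CR_def by simp

lemma est:
  assumes N: "real n \<ge> 25*Cc+75"
    and small: "4 * (2*real n+1) * ((24/25)^(n div 10) * (1 + 2/(c+d-a-b))) \<le> 1/50"
  shows "(\<Sum>k\<le>2*n+1. T1f n k) > 0"
    "\<bar>(\<Sum>k\<le>2*n+2. T2f n k) / (\<Sum>k\<le>2*n+1. T1f n k) - 2\<bar>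
       \<le> 25*CR/real n + 50 * ((24/25)^(n div 10) * (1 + 2/(c+d-a-b))) * (303*CR + 2)"
proof -
  note C = Cc_ge Cc_lin
  define K where "K = 7*n div 10"
  define K' where "K' = 7*n div 10 + n div 10"
  define Phi where "Phi = phif n K"
  define eps where "eps = (24/25::real)^(n div 10) * (1 + 2/(c+d-a-b))"
  define E where "E = Phi * eps"
  define S1 where "S1 = (\<Sum>k\<le>2*n+1. T1f n k)"
  define S2 where "S2 = (\<Sum>k\<le>2*n+2. T2f n k)"
  define Bk where "Bk = {..K'}"
  define Tl where "Tl = {K'<..2*n+1}"
  have Nr: "real n \<ge> 100" using N C by linarith
  have K'r: "real K' \<le> (4/5) * real n"
    using div10_bounds(1)[of "7*n"] div10_bounds(1)[of n] unfolding K'_def by simp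
  have K'n: "K' < 2*n+1"
  proof -
    have "real K' < real (2*n+1)" using K'r Nr by simp
    then show ?thesis by (simp only: of_nat_less_iff)
  qed
  have KK': "K \<le> K'" unfolding K_def K'_def by simp
  have Kr: "real K \<le> (4/5) * real n" using K'r KK' by (meson of_nat_le_iff order_trans)
  have Phi0: "Phi > 0" unfolding Phi_def using phi_pos[OF N Kr] .
  have eps0: "eps \<ge> 0" unfolding eps_def using dl by simp
  have E0: "E \<ge> 0" unfolding E_def using Phi0 eps0 by simp
  have split: "{..2*n+1} = Bk \<union> Tl" "Bk \<inter> Tl = {}" unfolding Bk_def Tl_def using K'n by auto
  have fin: "finite Bk" "finite Tl" unfolding Bk_def Tl_def by auto
  have sumsplit: "(\<Sum>k\<le>2*n+1. f k) = (\<Sum>k\<in>Bk. f k) + (\<Sum>k\<in>Tl. f k)" for f :: "nat \<Rightarrow> real"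
    unfolding split(1) by (rule sum.union_disjoint[OF fin split(2)])
  have cardT: "real (card Tl) \<le> 2*real n+1" unfolding Tl_def by simp
  have tail: "\<bar>phif n k\<bar> \<le> E" if "k \<in> Tl" for k
    using phi_tail[OF N, of k] that unfolding Tl_def E_def Phi_def eps_def K_def K'_def by (simp add: mult.assoc)
  have tailsum: "(\<Sum>k\<in>Tl. \<bar>phif n k\<bar>) \<le> (2*real n+1) * E"
  proof -
    have "(\<Sum>k\<in>Tl. \<bar>phif n k\<bar>) \<le> real (card Tl) * E" by (rule sum_bounded_above) (use tail in auto)
    also have "\<dots> \<le> (2*real n+1) * E" by (rule mult_right_mono[OF cardT E0])
    finally show ?thesis .
  qed
  have tailT1: "\<bar>\<Sum>k\<in>Tl. T1f n k\<bar> \<le> 4 * ((2*real n+1) * E)"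
  proof -
    have "\<bar>\<Sum>k\<in>Tl. T1f n k\<bar> \<le> (\<Sum>k\<in>Tl. \<bar>T1f n k\<bar>)" by (rule sum_abs)
    also have "\<dots> \<le> (\<Sum>k\<in>Tl. 4 * \<bar>phif n k\<bar>)"
      by (rule sum_mono) (use T1_upper[OF N] in \<open>auto simp: Tl_def\<close>)
    also have "\<dots> \<le> 4 * ((2*real n+1) * E)" using tailsum by (simp add: sum_distrib_left[symmetric])
    finally show ?thesis .
  qed
  have bulkpos: "T1f n k \<ge> phif n k / 25" "phif n k \<ge> 0" if "k \<in> Bk" for k
  proof -
    have "real k \<le> (4/5) * real n" using that K'r unfolding Bk_def by (meson atMost_iff of_nat_le_iff order_trans)
    then show "T1f n k \<ge> phif n k / 25" "phif n k \<ge> 0" using T1_lower[OF N] phi_pos[OF N] by (auto intro: less_imp_le)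
  qed
  have bulknn: "0 \<le> T1f n k" if "k \<in> Bk" for k
    using bulkpos[OF that] by (meson divide_nonneg_pos order_trans zero_less_numeral)
  have KB: "K \<in> Bk" unfolding Bk_def using KK' by simp
  have bulkT1: "(\<Sum>k\<in>Bk. T1f n k) \<ge> Phi / 25"
  proof -
    have "(\<Sum>k\<in>Bk. T1f n k) \<ge> T1f n K"
    proof (rule member_le_sum[OF KB])
      show "0 \<le> T1f n x" if "x \<in> Bk - {K}" for x
        using bulkpos[of x] that by (meson DiffD1 divide_nonneg_pos order_trans zero_less_numeral)
    qed (rule fin)
    moreover have "T1f n K \<ge> Phi / 25" using bulkpos(1)[OF KB] unfolding Phi_def .
    ultimately show ?thesis by linarith
  qed
  have smallE: "4 * ((2*real n+1) * E) \<le> Phi / 50"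
  proof -
    have "4 * ((2*real n+1) * E) = Phi * (4 * (2*real n+1) * eps)" unfolding E_def by (simp add: algebra_simps)
    also have "\<dots> \<le> Phi * (1/50)" using small Phi0 unfolding eps_def by (intro mult_left_mono) auto
    finally show ?thesis by simp
  qed
  have S1eq: "S1 = (\<Sum>k\<in>Bk. T1f n k) + (\<Sum>k\<in>Tl. T1f n k)" unfolding S1_def by (rule sumsplit)
  have S1lb: "S1 \<ge> Phi / 50" using S1eq bulkT1 tailT1 smallE by linarith
  then show "(\<Sum>k\<le>2*n+1. T1f n k) > 0" using Phi0 unfolding S1_def by linarith
  have S1pos: "S1 > 0" using S1lb Phi0 by linarith
  have al0: "real n + c + 1 - a > 0" using N C by linarith
  have mid: "S2 - 2 * S1 = (\<Sum>k\<le>2*n+1. phif n k * Rp n k) + lam n * phif n (2*n+1) * Pf n (2*n+1) + T2f n (2*n+2)"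
    unfolding S1_def S2_def by (rule main_identity[OF al0])
  have last: "2*n+1 \<in> Tl" unfolding Tl_def using K'n by simp
  have b1: "\<bar>lam n * phif n (2*n+1) * Pf n (2*n+1)\<bar> \<le> E"
  proof -
    have "\<bar>lam n * phif n (2*n+1) * Pf n (2*n+1)\<bar> = \<bar>lam n * Pf n (2*n+1)\<bar> * \<bar>phif n (2*n+1)\<bar>"
      by (simp add: abs_mult)
    also have "\<dots> \<le> 1 * E" by (rule mult_mono[OF lamP_bound[OF N] tail[OF last]]) auto
    finally show ?thesis by simp
  qed
  have b2: "\<bar>T2f n (2*n+2)\<bar> \<le> E" using T2last_bound[OF N] tail[OF last] by linarith
  have CRN: "CR / real n \<ge> 0" using CR_nonneg by simp
  have Rb: "\<bar>Rp n k\<bar> \<le> CR / real n" if "k \<in> Bk \<union> Tl" for k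
    using Rp_bound[OF N, of k] that split(1) by auto
  have b3: "\<bar>\<Sum>k\<le>2*n+1. phif n k * Rp n k\<bar> \<le> CR / real n * (25 * (\<Sum>k\<in>Bk. T1f n k) + (2*real n+1) * E)"
  proof -
    have "\<bar>\<Sum>k\<le>2*n+1. phif n k * Rp n k\<bar> \<le> (\<Sum>k\<le>2*n+1. \<bar>phif n k\<bar> * \<bar>Rp n k\<bar>)"
      using sum_abs[of "\<lambda>k. phif n k * Rp n k" "{..2*n+1}"] by (simp add: abs_mult)
    also have "\<dots> = (\<Sum>k\<in>Bk. \<bar>phif n k\<bar> * \<bar>Rp n k\<bar>) + (\<Sum>k\<in>Tl. \<bar>phif n k\<bar> * \<bar>Rp n k\<bar>)" by (rule sumsplit)
    also have "\<dots> \<le> (\<Sum>k\<in>Bk. (25 * T1f n k) * (CR / real n)) + (\<Sum>k\<in>Tl. \<bar>phif n k\<bar> * (CR / real n))"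
    proof (rule add_mono; rule sum_mono)
      fix k assume k: "k \<in> Bk"
      have "\<bar>phif n k\<bar> \<le> 25 * T1f n k" using bulkpos[OF k] by simp
      then show "\<bar>phif n k\<bar> * \<bar>Rp n k\<bar> \<le> (25 * T1f n k) * (CR / real n)"
        by (rule mult_mono) (use Rb k bulknn in auto)
    next
      fix k assume k: "k \<in> Tl"
      show "\<bar>phif n k\<bar> * \<bar>Rp n k\<bar> \<le> \<bar>phif n k\<bar> * (CR / real n)"
        by (rule mult_left_mono) (use Rb k in auto)
    qed
    also have "\<dots> = CR / real n * (25 * (\<Sum>k\<in>Bk. T1f n k) + (\<Sum>k\<in>Tl. \<bar>phif n k\<bar>))"
      by (simp add: sum_distrib_left sum_distrib_right algebra_simps)
    also have "\<dots> \<le> CR / real n * (25 * (\<Sum>k\<in>Bk. T1f n k) + (2*real n+1) * E)"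
      by (rule mult_left_mono[OF _ CRN]) (use tailsum in simp)
    finally show ?thesis .
  qed
  have bulkle: "(\<Sum>k\<in>Bk. T1f n k) \<le> S1 + 4 * ((2*real n+1) * E)" using S1eq tailT1 by linarith
  have n3: "(2*real n+1) / real n \<le> 3" using Nr by (simp add: divide_le_eq)
  have "\<bar>S2 - 2 * S1\<bar> \<le> CR / real n * (25 * (\<Sum>k\<in>Bk. T1f n k) + (2*real n+1) * E) + E + E"
    unfolding mid using b1 b2 b3 abs_triangle_ineq[of "(\<Sum>k\<le>2*n+1. phif n k * Rp n k) + lam n * phif n (2*n+1) * Pf n (2*n+1)" "T2f n (2*n+2)"]
      abs_triangle_ineq[of "(\<Sum>k\<le>2*n+1. phif n k * Rp n k)" "lam n * phif n (2*n+1) * Pf n (2*n+1)"]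
    by linarith
  also have "\<dots> \<le> CR / real n * (25 * (S1 + 4 * ((2*real n+1) * E)) + (2*real n+1) * E) + E + E"
    using bulkle CRN by (intro add_mono mult_left_mono) auto
  also have "\<dots> = 25 * CR / real n * S1 + CR * ((2*real n+1) / real n) * (101 * E) + 2 * E"
    using Nr by (simp add: field_simps)
  also have "\<dots> \<le> 25 * CR / real n * S1 + CR * 3 * (101 * E) + 2 * E"
    using n3 CR_nonneg E0 by (intro add_mono mult_right_mono mult_left_mono) auto
  finally have D: "\<bar>S2 - 2 * S1\<bar> \<le> 25 * CR / real n * S1 + (303 * CR + 2) * E" by (simp add: algebra_simps)
  have "\<bar>S2 / S1 - 2\<bar> = \<bar>S2 - 2 * S1\<bar> / S1" using S1pos by (simp add: field_simps abs_divide)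
  also have "\<dots> \<le> (25 * CR / real n * S1 + (303 * CR + 2) * E) / S1" using D S1pos by (simp add: divide_right_mono)
  also have "\<dots> = 25 * CR / real n + (303 * CR + 2) * E / S1" using S1pos by (simp add: field_simps)
  also have "\<dots> \<le> 25 * CR / real n + (303 * CR + 2) * (50 * eps)"
  proof -
    have "E / S1 \<le> E / (Phi / 50)" using S1lb Phi0 E0 by (intro divide_left_mono) auto
    also have "\<dots> = 50 * eps" unfolding E_def using Phi0 by simp
    finally have es: "E / S1 \<le> 50 * eps" .
    have "(303 * CR + 2) * E / S1 = (303 * CR + 2) * (E / S1)" by simp
    also have "\<dots> \<le> (303 * CR + 2) * (50 * eps)" by (rule mult_left_mono[OF es]) (use CR_nonneg in simp)
    finally show ?thesis by simp
  qed
  finally show "\<bar>(\<Sum>k\<le>2*n+2. T2f n k) / (\<Sum>k\<le>2*n+1. T1f n k) - 2\<bar>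
       \<le> 25*CR/real n + 50 * ((24/25)^(n div 10) * (1 + 2/(c+d-a-b))) * (303*CR + 2)"
    unfolding S1_def[symmetric] S2_def[symmetric] eps_def[symmetric] by (simp add: algebra_simps)
qed


lemma eps_bound:
  fixes th :: real
  assumes th: "th = root 10 (24/25)"
  shows "(24/25::real)^(n div 10) \<le> th^n / th^9" "0 < th" "th < 1"
proof -
  show t0: "0 < th" unfolding th by simp
  show t1: "th < 1" unfolding th by simp
  have t10: "th^10 = 24/25" unfolding th by (simp add: real_root_pow_pos)
  have "th^n = th^(10*(n div 10) + n mod 10)" by simp
  also have "\<dots> = (th^10)^(n div 10) * th^(n mod 10)" by (simp only: power_add power_mult)
  also have "\<dots> \<ge> (24/25)^(n div 10) * th^9"
  proof -
    have "th^9 \<le> th^(n mod 10)" by (rule power_decreasing) (use t0 t1 in auto)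
    then show ?thesis unfolding t10 by (intro mult_left_mono) auto
  qed
  finally show "(24/25::real)^(n div 10) \<le> th^n / th^9" using t0 by (simp add: field_simps)
qed

lemma ratio_limit:
  "(\<lambda>n. (\<Sum>k\<le>2*n+2. T2f n k) / (\<Sum>k\<le>2*n+1. T1f n k)) \<longlonglongrightarrow> 2"
proof -
  define th where "th = root 10 (24/25::real)"
  define M where "M = 1 + 2/(c+d-a-b)"
  have "2/(c+d-a-b) > 0" using dl by simp
  then have M0: "M > 0" unfolding M_def by linarith
  have th0: "0 < th" and th1: "th < 1" using eps_bound[OF th_def] by auto
  have eb: "(24/25::real)^(n div 10) \<le> th^n / th^9" for n using eps_bound[OF th_def] by auto
  have l1: "(\<lambda>n. real n * th^n) \<longlonglongrightarrow> 0" by (rule powser_times_n_limit_0) (use th0 th1 in simp)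
  have l2: "(\<lambda>n. th^n) \<longlonglongrightarrow> 0" by (rule LIMSEQ_power_zero) (use th0 th1 in simp)
  define h where "h n = 25*CR/real n + 50 * M * (303*CR + 2) / th^9 * th^n" for n
  have hl: "h \<longlonglongrightarrow> 0"
  proof -
    have "(\<lambda>n. 25*CR/real n + 50 * M * (303*CR + 2) / th^9 * th^n) \<longlonglongrightarrow> 0 + 50 * M * (303*CR + 2) / th^9 * 0"
      by (intro tendsto_add tendsto_mult lim_const_over_n tendsto_const l2)
    then show ?thesis unfolding h_def by simp
  qed
  define sm where "sm n = 4 * M / th^9 * (2 * (real n * th^n) + th^n)" for n
  have sml: "sm \<longlonglongrightarrow> 0"
  proof -
    have "sm \<longlonglongrightarrow> 4 * M / th^9 * (2 * 0 + 0)"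
      unfolding sm_def by (intro tendsto_mult tendsto_add tendsto_const l1 l2)
    then show ?thesis by simp
  qed
  have ev1: "eventually (\<lambda>n. sm n < 1/50) sequentially"
    using order_tendstoD(2)[OF sml, of "1/50"] by simp
  obtain N0 :: nat where N0: "real N0 \<ge> 25*Cc+75" using real_arch_simple by blast
  have ev2: "eventually (\<lambda>n. real n \<ge> 25*Cc+75) sequentially"
    unfolding eventually_sequentially by (rule exI[of _ N0]) (use N0 in auto)
  have ev: "eventually (\<lambda>n. \<bar>(\<Sum>k\<le>2*n+2. T2f n k) / (\<Sum>k\<le>2*n+1. T1f n k) - 2\<bar> \<le> h n) sequentially"
    using ev1 ev2
  proof eventually_elim
    case (elim n)
    have E: "(24/25::real)^(n div 10) * M \<le> M / th^9 * th^n"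
      using mult_right_mono[OF eb[of n], of M] M0 by (simp add: field_simps)
    have small: "4 * (2*real n+1) * ((24/25)^(n div 10) * (1 + 2/(c+d-a-b))) \<le> 1/50"
    proof -
      have "4 * (2*real n+1) * ((24/25)^(n div 10) * M) \<le> 4 * (2*real n+1) * (M / th^9 * th^n)"
        by (rule mult_left_mono[OF E]) simp
      also have "\<dots> = sm n" unfolding sm_def by (simp add: algebra_simps)
      finally show ?thesis using elim(1) unfolding M_def by simp
    qed
    have "\<bar>(\<Sum>k\<le>2*n+2. T2f n k) / (\<Sum>k\<le>2*n+1. T1f n k) - 2\<bar>
       \<le> 25*CR/real n + 50 * ((24/25)^(n div 10) * M) * (303*CR + 2)"
      using est(2)[OF elim(2) small] unfolding M_def .
    also have "\<dots> \<le> 25*CR/real n + 50 * (M / th^9 * th^n) * (303*CR + 2)"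
      using E CR_nonneg by (intro add_left_mono mult_right_mono mult_left_mono) auto
    also have "\<dots> = h n" unfolding h_def by (simp add: algebra_simps)
    finally show ?case .
  qed
  have "(\<lambda>n. (\<Sum>k\<le>2*n+2. T2f n k) / (\<Sum>k\<le>2*n+1. T1f n k) - 2) \<longlonglongrightarrow> 0"
    by (rule Lim_null_comparison[OF _ hl]) (use ev in simp)
  then show ?thesis by (rule LIM_zero_cancel)
qed


lemma final_limit:
  "(\<lambda>n. hyp3F2_term (2*n+2) (c + real n + 1) (d + real n) a b 1
       / hyp3F2_term (2*n+1) (c + real n) (d + real n) a b 1) \<longlonglongrightarrow> -2"
proof -
  define r where "r n = (a + b - (c + real n + 1) - (d + real n)) / (b + real (2*n+1))" for n
  have eq: "hyp3F2_term (2*n+2) (c + real n + 1) (d + real n) a b 1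
       / hyp3F2_term (2*n+1) (c + real n) (d + real n) a b 1
     = r n * ((\<Sum>k\<le>2*n+2. T2f n k) / (\<Sum>k\<le>2*n+1. T1f n k))" for n
  proof -
    define e1 where "e1 = a + b - (c + real n) - (d + real n)"
    define P where "P = pochhammer e1 (2*n+1)"
    define B where "B = pochhammer b (2*n+1)"
    have P0: "P \<noteq> 0" unfolding P_def e1_def by (rule e1_nz) simp
    have B0: "B \<noteq> 0" unfolding B_def using pochhammer_pos[OF b, of "2*n+1"] by simp
    have z: "a + b - (c + real n + 1) - (d + real n) + 1 = e1" unfolding e1_def by simp
    have p2: "pochhammer (a + b - (c + real n + 1) - (d + real n)) (2*n+2)
        = (a + b - (c + real n + 1) - (d + real n)) * P"
      unfolding P_def using pochhammer_rec[of "a + b - (c + real n + 1) - (d + real n)" "2*n+1"] z by simp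
    have b2: "pochhammer b (2*n+2) = B * (b + real (2*n+1))"
      unfolding B_def using pochhammer_Suc[of b "2*n+1"] by simp
    have G2: "hyp3F2_term (2*n+2) (c + real n + 1) (d + real n) a b 1 = r n * ((P / B) * (\<Sum>k\<le>2*n+2. T2f n k))"
      unfolding repr2 p2 b2 r_def by (simp add: field_simps)
    have G1: "hyp3F2_term (2*n+1) (c + real n) (d + real n) a b 1 = (P / B) * (\<Sum>k\<le>2*n+1. T1f n k)"
      unfolding repr1 P_def B_def e1_def ..
    have PB: "P / B \<noteq> 0" using P0 B0 by simp
    show ?thesis unfolding G1 G2 using PB by (simp add: mult_divide_mult_cancel_left)
  qed
  have rl: "r \<longlonglongrightarrow> -1"
  proof -
    define C where "C = a + 2*b - c - d"
    have re: "r n = -1 + C / (b + 1 + 2 * real n)" for n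
    proof -
      have "b + real (2*n+1) > 0" using b by simp
      then show ?thesis unfolding r_def C_def by (simp add: field_simps)
    qed
    have "(\<lambda>n. C / (b + 1 + 2 * real n)) \<longlonglongrightarrow> 0"
    proof (rule Lim_null_comparison)
      show "(\<lambda>n. \<bar>C\<bar> / real n) \<longlonglongrightarrow> 0" by (rule lim_const_over_n)
      show "\<forall>\<^sub>F n in sequentially. norm (C / (b + 1 + 2 * real n)) \<le> \<bar>C\<bar> / real n"
        unfolding eventually_sequentially
      proof (intro exI allI impI)
        fix n :: nat assume n: "1 \<le> n"
        have d0: "b + 1 + 2 * real n \<ge> real n" using b by simp
        have n0: "real n > 0" using n by simp
        have "norm (C / (b + 1 + 2 * real n)) = \<bar>C\<bar> / (b + 1 + 2 * real n)" using d0 n0 by (simp add: abs_divide)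
        also have "\<dots> \<le> \<bar>C\<bar> / real n" by (rule divide_left_mono) (use d0 n0 in auto)
        finally show "norm (C / (b + 1 + 2 * real n)) \<le> \<bar>C\<bar> / real n" .
      qed
    qed
    then have "(\<lambda>n. -1 + C / (b + 1 + 2 * real n)) \<longlonglongrightarrow> -1 + 0" by (intro tendsto_add tendsto_const)
    then show ?thesis unfolding re[abs_def] by simp
  qed
  have "(\<lambda>n. r n * ((\<Sum>k\<le>2*n+2. T2f n k) / (\<Sum>k\<le>2*n+1. T1f n k))) \<longlonglongrightarrow> -1 * 2"
    by (rule tendsto_mult[OF rl ratio_limit])
  then show ?thesis unfolding eq by simp
qed

end

theorem corollary5:
  fixes a b c d :: real
  assumes "a > 0" and "b > 0" and "c + d - a - b > 0"
    and "\<forall>j::nat. d - a \<noteq> - real j"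
    and "\<forall>j::nat. d - b \<noteq> - real j"
    and "\<forall>j::nat. c + 1 - a \<noteq> - real j"
    and "\<forall>j::nat. c - b \<noteq> - real j"
  shows "(\<lambda>n. hyp3F2_term (2*n+2) (c + real n + 1) (d + real n) a b 1
              / hyp3F2_term (2*n+1) (c + real n) (d + real n) a b 1)
         \<longlonglongrightarrow> -2"
  using final_limit[OF assms(1,2,3)] .

end
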